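(* A linkage matching field is uniquely determined by its set of Chow covectors: if $\mathcal{M}$ and $\mathcal{M}'$ are linkage $(n,d)$-matching fields on $L\sqcup R$ ($n\ge d$) with $\{\Omega_\rho(\mathcal{M})\}_\rho=\{\Omega_\rho(\mathcal{M}')\}_\rho$, then $\mathcal{M}=\mathcal{M}'$.
   Context: $L=\{\ell_1,\dots,\ell_n\}$, $R=\{r_1,\dots,r_d\}$; graphs are bipartite on $L\sqcup R$ identified with edge sets. An $(n,d)$-matching field $\mathcal{M}=(M_\sigma)$ assigns to each $d$-subset $\sigma\subseteq L$ a perfect matching $M_\sigma$ between $\sigma$ and $R$; it is linkage if for every $r_i\in R$ and every $(d+1)$-subset $\tau\subseteq L$ there exist distinct $\ell_j,\ell_{j'}\in\tau$ with $M_{\tau\setminus\{\ell_j\}}$ and $M_{\tau\setminus\{\ell_{j'}\}}$ agreeing except on the edges incident with $r_i$. For an $(n-d+1)$-subset $\rho\subseteq L$, the Chow covector $\Omega_\rho(\mathcal{M})$ is the graph with edges $(\ell_j,r)$ for $\ell_j\in\rho$, where $r$ is the node matched to $\ell_j$ in $M_{(L\setminus\rho)\cup\{\ell_j\}}$. *)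

theory Defs
  imports Main
begin

text \<open>Left nodes l_1..l_n are encoded as 0..<n, right nodes r_1..r_d as 0..<d.
  A bipartite graph is its edge set, a set of pairs (left node, right node).\<close>

definition Lnodes :: "nat \<Rightarrow> nat set" where "Lnodes n = {0..<n}"
definition Rnodes :: "nat \<Rightarrow> nat set" where "Rnodes d = {0..<d}"

definition perfect_matching :: "nat set \<Rightarrow> nat set \<Rightarrow> (nat \<times> nat) set \<Rightarrow> bool" where
  "perfect_matching S T E \<longleftrightarrow>
     E \<subseteq> S \<times> T \<and>
     (\<forall>l\<in>S. \<exists>!r. (l, r) \<in> E) \<and>
     (\<forall>r\<in>T. \<exists>!l. (l, r) \<in> E)"

text \<open>An (n,d)-matching field: to every d-subset sigma of L a perfect matching
  between sigma and R (values on other sets are irrelevant).\<close>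
definition matching_field :: "nat \<Rightarrow> nat \<Rightarrow> (nat set \<Rightarrow> (nat \<times> nat) set) \<Rightarrow> bool" where
  "matching_field n d M \<longleftrightarrow>
     (\<forall>\<sigma>. \<sigma> \<subseteq> Lnodes n \<and> card \<sigma> = d \<longrightarrow> perfect_matching \<sigma> (Rnodes d) (M \<sigma>))"

definition incident_right :: "nat \<Rightarrow> (nat \<times> nat) set" where
  "incident_right i = {e. snd e = i}"

definition linkage :: "nat \<Rightarrow> nat \<Rightarrow> (nat set \<Rightarrow> (nat \<times> nat) set) \<Rightarrow> bool" where
  "linkage n d M \<longleftrightarrow>
     (\<forall>i\<in>Rnodes d. \<forall>\<tau>. \<tau> \<subseteq> Lnodes n \<and> card \<tau> = d + 1 \<longrightarrow>
        (\<exists>j\<in>\<tau>. \<exists>j'\<in>\<tau>. j \<noteq> j' \<and>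
           M (\<tau> - {j}) - incident_right i = M (\<tau> - {j'}) - incident_right i))"

definition linkage_matching_field :: "nat \<Rightarrow> nat \<Rightarrow> (nat set \<Rightarrow> (nat \<times> nat) set) \<Rightarrow> bool" where
  "linkage_matching_field n d M \<longleftrightarrow> matching_field n d M \<and> linkage n d M"

definition chow_covector :: "nat \<Rightarrow> (nat set \<Rightarrow> (nat \<times> nat) set) \<Rightarrow> nat set \<Rightarrow> (nat \<times> nat) set" where
  "chow_covector n M \<rho> = {(l, r). l \<in> \<rho> \<and> (l, r) \<in> M ((Lnodes n - \<rho>) \<union> {l})}"

definition chow_covectors :: "nat \<Rightarrow> nat \<Rightarrow> (nat set \<Rightarrow> (nat \<times> nat) set) \<Rightarrow> (nat \<times> nat) set set" where
  "chow_covectors n d M =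
     {chow_covector n M \<rho> | \<rho>. \<rho> \<subseteq> Lnodes n \<and> card \<rho> = n - d + 1}"

end

theory Submission
  imports Defs
begin

lemma dom_chow:
  assumes mf: "matching_field n d M" and rs: "\<rho> \<subseteq> Lnodes n" and rc: "card \<rho> = n - d + 1"
    and d1: "d \<ge> 1" and dn: "d \<le> n"
  shows "fst ` chow_covector n M \<rho> = \<rho>"
proof
  show "fst ` chow_covector n M \<rho> \<subseteq> \<rho>" by (auto simp: chow_covector_def)
next
  show "\<rho> \<subseteq> fst ` chow_covector n M \<rho>"
  proof
    fix l assume l: "l \<in> \<rho>"
    define S where "S = (Lnodes n - \<rho>) \<union> {l}"
    have fin: "finite (Lnodes n)" by (simp add: Lnodes_def)
    have c1: "card (Lnodes n - \<rho>) = d - 1"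
      using card_Diff_subset[OF finite_subset[OF rs fin] rs] rc dn d1
      by (simp add: Lnodes_def)
    have "card S = d" unfolding S_def using c1 l d1 fin
      by (subst card_Un_disjoint) auto
    moreover have "S \<subseteq> Lnodes n" using l rs by (auto simp: S_def)
    ultimately have "perfect_matching S (Rnodes d) (M S)" using mf by (auto simp: matching_field_def)
    then obtain r where "(l, r) \<in> M S" unfolding perfect_matching_def S_def by blast
    then have "(l, r) \<in> chow_covector n M \<rho>" using l by (auto simp: chow_covector_def S_def)
    then show "l \<in> fst ` chow_covector n M \<rho>" by force
  qed
qed

lemma one_dir:
  assumes "n \<ge> d"
    and mf: "matching_field n d M" and mf': "matching_field n d M'"
    and eq: "chow_covectors n d M = chow_covectors n d M'"
    and ss: "\<sigma> \<subseteq> Lnodes n" and sc: "card \<sigma> = d"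
  shows "M \<sigma> \<subseteq> M' \<sigma>"
proof
  fix e assume e: "e \<in> M \<sigma>"
  obtain l r where lr: "e = (l, r)" by (cases e)
  have "perfect_matching \<sigma> (Rnodes d) (M \<sigma>)" using mf ss sc by (auto simp: matching_field_def)
  then have l: "l \<in> \<sigma>" using e lr by (auto simp: perfect_matching_def)
  have fin: "finite (Lnodes n)" by (simp add: Lnodes_def)
  have fs: "finite \<sigma>" using finite_subset[OF ss fin] .
  have d1: "d \<ge> 1" using l sc fs by (cases "d = 0") auto
  define \<rho> where "\<rho> = (Lnodes n - \<sigma>) \<union> {l}"
  have rs: "\<rho> \<subseteq> Lnodes n" using l ss by (auto simp: \<rho>_def)
  have c1: "card (Lnodes n - \<sigma>) = n - d"
    using card_Diff_subset[OF fs ss] sc by (simp add: Lnodes_def)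
  have rc: "card \<rho> = n - d + 1" unfolding \<rho>_def using c1 l fin
    by (subst card_Un_disjoint) auto
  have bk: "(Lnodes n - \<rho>) \<union> {l} = \<sigma>" using l ss by (auto simp: \<rho>_def)
  have inC: "(l, r) \<in> chow_covector n M \<rho>" using e lr l bk
    by (auto simp: chow_covector_def \<rho>_def)
  have "chow_covector n M \<rho> \<in> chow_covectors n d M'"
    using eq rs rc by (auto simp: chow_covectors_def)
  then obtain q where r': "q \<subseteq> Lnodes n" "card q = n - d + 1"
    and ceq: "chow_covector n M \<rho> = chow_covector n M' q"
    by (auto simp: chow_covectors_def)
  have "q = \<rho>"
    using dom_chow[OF mf' r' d1 assms(1)] dom_chow[OF mf rs rc d1 assms(1)] ceq by simp
  then have "(l, r) \<in> chow_covector n M' \<rho>" using inC ceq by simp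
  then show "e \<in> M' \<sigma>" using lr bk by (simp add: chow_covector_def)
qed

theorem corollary3p24:
  fixes n d :: nat and M M' :: "nat set \<Rightarrow> (nat \<times> nat) set"
  assumes "n \<ge> d"
    and "linkage_matching_field n d M"
    and "linkage_matching_field n d M'"
    and "chow_covectors n d M = chow_covectors n d M'"
  shows "\<forall>\<sigma>. \<sigma> \<subseteq> Lnodes n \<and> card \<sigma> = d \<longrightarrow> M \<sigma> = M' \<sigma>"
proof (intro allI impI)
  fix \<sigma> assume h: "\<sigma> \<subseteq> Lnodes n \<and> card \<sigma> = d"
  have mf: "matching_field n d M" "matching_field n d M'"
    using assms(2,3) by (auto simp: linkage_matching_field_def)
  show "M \<sigma> = M' \<sigma>"
    using one_dir[OF assms(1) mf(1) mf(2) assms(4)] one_dir[OF assms(1) mf(2) mf(1) assms(4)[symmetric]] h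
    by blast
qed

end
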